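(* Let $X$ be a real Banach space and $Y$ a linear subspace of $X$ with norm $\|\cdot\|_Y$ such that $K:=U(Y)=\{g\in Y:\|g\|_Y\le1\}$ is compact in $X$, and let $C_0$ satisfy $\|g\|_X\le C_0\|g\|_Y$ for $g\in Y$. Let $\lambda_1,\dots,\lambda_m\in X^*$ with $\|\lambda_j\|_{X^*}=1$, $f\in K$, $w:=\lambda(f)$, and assume $R(K_w)_X\neq0$. Fix $\alpha>0$, $\beta>0$ and for $\mu>0$ define on $X$ $$\mathcal{L}'_\mu(g):=\|w-\lambda(g)\|^\alpha+\mu\|g\|_Y^\beta .$$ Let $C>2$. Then there is $\mu_0>0$ such that for all $0<\mu\le\mu_0$ the following hold. (a) If $\delta>0$ satisfies $\delta^\alpha\le\mu^2$, $\Sigma\subset X$ satisfies $\operatorname{dist}(K,\Sigma\cap K)_X<\delta$, and $\hat f\in\mathop{\rm argmin}_{g\in\Sigma}\mathcal{L}'_\mu(g)$ is any minimizer, then $\|f-\hat f\|_X\le C\,R(K_w)_X$. (b) If moreover $\epsilon>0$ and $\delta$ satisfy $\epsilon\le\delta^\alpha\le\frac12\mu^2$, $\Sigma$ and $\hat f$ are as in (a), and $\tilde f\in\Sigma$ satisfies $\mathcal{L}'_\mu(\tilde f)\le\mathcal{L}'_\mu(\hat f)+\epsilon$, then $\|f-\tilde f\|_X\le C\,R(K_w)_X$.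
   Context: Convention: $\|g\|_Y:=\infty$ for $g\in X\setminus Y$. $\lambda(g):=(\lambda_1(g),\dots,\lambda_m(g))$; on $\mathbb{R}^m$, $\|v\|:=\big[\frac1m\sum_{j=1}^m|v_j|^2\big]^{1/2}$. For $A,B\subset X$, $\operatorname{dist}(A,B)_X:=\sup_{a\in A}\inf_{b\in B}\|a-b\|_X$. $K_w:=\{h\in K:\lambda(h)=w\}$. For $S\subset X$, $R(S)_X:=\inf\{r:\ S\subset B(z,r)_X\text{ for some }z\in X\}$ (Chebyshev radius). *)

theory Defs
  imports "HOL-Analysis.Analysis"
begin

definition is_norm_on :: "'a::real_vector set \<Rightarrow> ('a \<Rightarrow> real) \<Rightarrow> bool" where
  "is_norm_on Y nY \<longleftrightarrow>
     (\<forall>x\<in>Y. 0 \<le> nY x) \<and>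
     (\<forall>x\<in>Y. nY x = 0 \<longleftrightarrow> x = 0) \<and>
     (\<forall>x\<in>Y. \<forall>c. nY (c *\<^sub>R x) = \<bar>c\<bar> * nY x) \<and>
     (\<forall>x\<in>Y. \<forall>y\<in>Y. nY (x + y) \<le> nY x + nY y)"

definition vnorm :: "nat \<Rightarrow> (nat \<Rightarrow> real) \<Rightarrow> real" where
  "vnorm m v = sqrt ((1 / real m) * (\<Sum>j<m. \<bar>v j\<bar>^2))"

definition cheb_radius :: "'a::real_normed_vector set \<Rightarrow> real" where
  "cheb_radius S = Inf {r. \<exists>z. S \<subseteq> cball z r}"

text \<open>One-sided distance dist(A,B)_X = sup_{a in A} inf_{b in B} norm(a - b), in ereal
  (infimum over the empty set is infinity).\<close>
definition set_dist :: "'a::real_normed_vector set \<Rightarrow> 'a set \<Rightarrow> ereal" where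
  "set_dist A B = (SUP a\<in>A. INF b\<in>B. ereal (norm (a - b)))"

text \<open>The functional L'_mu(g) = norm(w - lambda(g))^alpha + mu * norm_Y(g)^beta,
  with the convention norm_Y(g) = infinity for g outside Y.\<close>
definition Lprime :: "'a set \<Rightarrow> ('a \<Rightarrow> real) \<Rightarrow> nat \<Rightarrow> (nat \<Rightarrow> 'a \<Rightarrow> real) \<Rightarrow> (nat \<Rightarrow> real)
                      \<Rightarrow> real \<Rightarrow> real \<Rightarrow> real \<Rightarrow> 'a \<Rightarrow> ereal" where
  "Lprime Y nY m lam w \<alpha> \<beta> \<mu> g =
     (if g \<in> Y then ereal (vnorm m (\<lambda>j. w j - lam j g) powr \<alpha> + \<mu> * nY g powr \<beta>)
      else \<infinity>)"

end

theory Submission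
  imports Defs
begin

lemma vnorm_le:
  assumes "m \<ge> 1" "\<forall>j<m. \<bar>v j\<bar> \<le> M"
  shows "vnorm m v \<le> M"
proof -
  have "\<bar>v 0\<bar> \<le> M" using assms by simp
  hence M0: "0 \<le> M" by (meson abs_ge_zero order_trans)
  have "(\<Sum>j<m. \<bar>v j\<bar>^2) \<le> (\<Sum>j<m. M^2)"
    by (rule sum_mono) (metis assms(2) abs_ge_zero power_mono lessThan_iff)
  hence "(1 / real m) * (\<Sum>j<m. \<bar>v j\<bar>^2) \<le> M^2"
    using assms(1) by (simp add: field_simps)
  hence "vnorm m v \<le> sqrt (M^2)" unfolding vnorm_def by (rule real_sqrt_le_mono)
  thus ?thesis using M0 by simp
qed

lemma vnorm_ge:
  assumes "j < m"
  shows "\<bar>v j\<bar> \<le> sqrt (real m) * vnorm m v"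
proof -
  have "\<bar>v j\<bar>^2 \<le> (\<Sum>i<m. \<bar>v i\<bar>^2)"
    using assms by (intro member_le_sum) auto
  hence "sqrt (\<bar>v j\<bar>^2) \<le> sqrt (\<Sum>i<m. \<bar>v i\<bar>^2)" by (rule real_sqrt_le_mono)
  moreover have "sqrt (real m) * vnorm m v = sqrt (\<Sum>i<m. \<bar>v i\<bar>^2)"
    using assms unfolding vnorm_def by (simp add: real_sqrt_mult[symmetric])
  ultimately show ?thesis by simp
qed

lemma vnorm_nonneg: "0 \<le> vnorm m v" unfolding vnorm_def
  by (intro real_sqrt_ge_zero mult_nonneg_nonneg sum_nonneg) auto

lemma cheb_bound:
  fixes Kw :: "'a::real_normed_vector set"
  assumes "bounded Kw" "f \<in> Kw" "h \<in> Kw"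
  shows "norm (f - h) \<le> 2 * cheb_radius Kw"
proof -
  let ?S = "{r. \<exists>z. Kw \<subseteq> cball z r}"
  obtain e x where "Kw \<subseteq> cball x e" using assms(1) unfolding bounded_subset_cball by blast
  hence ne: "?S \<noteq> {}" by blast
  have "norm (f - h) / 2 \<le> Inf ?S"
  proof (rule cInf_greatest[OF ne])
    fix r assume "r \<in> ?S"
    then obtain z where z: "Kw \<subseteq> cball z r" by blast
    hence "dist z f \<le> r" "dist z h \<le> r" using assms by auto
    moreover have "norm (f - h) \<le> dist z f + dist z h"
    proof -
      have "norm (f - h) = dist f h" by (simp add: dist_norm)
      also have "\<dots> \<le> dist f z + dist z h" by (rule dist_triangle)
      finally show ?thesis by (simp add: dist_commute)
    qed
    ultimately show "norm (f - h) / 2 \<le> r" by simp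
  qed
  thus ?thesis unfolding cheb_radius_def by simp
qed

lemma key_compact:
  fixes Y :: "'a::real_normed_vector set"
  assumes Ysub: "subspace Y" and nYn: "is_norm_on Y nY" and Kc: "compact K"
    and Kdef: "K = {g\<in>Y. nY g \<le> 1}"
    and lin: "\<forall>j<m. bounded_linear (lam j)"
    and Kwdef: "Kw = {h\<in>K. \<forall>j<m. lam j h = w j}"
    and bnd: "\<forall>h\<in>Kw. norm (f - h) \<le> 2 * R"
    and Rpos: "R > 0" and Cgt: "C > 2"
  shows "\<exists>\<eta>>0. \<forall>g\<in>Y. nY g \<le> 1 + \<eta> \<and> (\<forall>j<m. \<bar>lam j g - w j\<bar> \<le> \<eta>) \<longrightarrow> norm (f - g) \<le> C * R"
proof (rule ccontr)
  assume neg: "\<not> ?thesis"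
  have "\<exists>g\<in>Y. nY g \<le> 1 + \<eta> \<and> (\<forall>j<m. \<bar>lam j g - w j\<bar> \<le> \<eta>) \<and> norm (f - g) > C * R"
    if "\<eta> > 0" for \<eta> using neg that by (auto simp: not_le)
  hence "\<forall>n. \<exists>g\<in>Y. nY g \<le> 1 + inverse (real (Suc n)) \<and> (\<forall>j<m. \<bar>lam j g - w j\<bar> \<le> inverse (real (Suc n)))
          \<and> norm (f - g) > C * R"
    by simp
  then obtain g where g: "\<And>n. g n \<in> Y" "\<And>n. nY (g n) \<le> 1 + inverse (real (Suc n))"
    "\<And>n j. j < m \<Longrightarrow> \<bar>lam j (g n) - w j\<bar> \<le> inverse (real (Suc n))"
    "\<And>n. norm (f - g n) > C * R"
    by metis
  define e where "e n = inverse (real (Suc n))" for n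
  have epos: "e n > 0" for n unfolding e_def by simp
  define h where "h n = (1 / (1 + e n)) *\<^sub>R g n" for n
  have hK: "h n \<in> K" for n
  proof -
    have "h n \<in> Y" unfolding h_def using Ysub g(1) by (simp add: subspace_scale)
    moreover have "nY (h n) = \<bar>1 / (1 + e n)\<bar> * nY (g n)"
    proof -
      have sc: "\<forall>x\<in>Y. \<forall>c. nY (c *\<^sub>R x) = \<bar>c\<bar> * nY x" using nYn unfolding is_norm_on_def by blast
      show ?thesis unfolding h_def using sc g(1) by blast
    qed
    moreover have "\<bar>1 / (1 + e n)\<bar> * nY (g n) \<le> 1"
      using epos[of n] g(2)[of n] unfolding e_def[symmetric]
      by (simp add: field_simps)
    ultimately show ?thesis unfolding Kdef by simp
  qed
  obtain l r where l: "l \<in> K" "strict_mono (r :: nat \<Rightarrow> nat)" "(h \<circ> r) \<longlonglongrightarrow> l"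
    using seq_compactE[OF compact_imp_seq_compact[OF Kc], of h] hK by blast
  have e0: "e \<longlonglongrightarrow> 0" unfolding e_def using LIMSEQ_inverse_real_of_nat .
  have er: "(e \<circ> r) \<longlonglongrightarrow> 0" using LIMSEQ_subseq_LIMSEQ[OF e0 l(2)] .
  have geq: "g (r n) = (1 + e (r n)) *\<^sub>R h (r n)" for n
    unfolding h_def using epos[of "r n"] by simp
  have "(\<lambda>n. (1 + e (r n)) *\<^sub>R h (r n)) \<longlonglongrightarrow> (1 + 0) *\<^sub>R l"
    using er l(3) by (intro tendsto_scaleR tendsto_add) (auto simp: o_def)
  hence gl: "(\<lambda>n. g (r n)) \<longlonglongrightarrow> l" using geq by simp
  have "l \<in> Kw"
  proof -
    have "lam j l = w j" if j: "j < m" for j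
    proof -
      have bl: "bounded_linear (lam j)" using lin j by blast
      have lim1: "(\<lambda>n. \<bar>lam j (g (r n)) - w j\<bar>) \<longlonglongrightarrow> \<bar>lam j l - w j\<bar>"
        by (intro tendsto_rabs tendsto_diff bounded_linear.tendsto[OF bl] gl tendsto_const)
      have ineq: "\<forall>n. \<bar>lam j (g (r n)) - w j\<bar> \<le> (e \<circ> r) n"
        using g(3)[OF j] unfolding e_def by simp
      have "\<bar>lam j l - w j\<bar> \<le> 0" by (rule LIMSEQ_le[OF lim1 er]) (use ineq in blast)
      thus ?thesis by simp
    qed
    thus ?thesis using l(1) Kwdef by simp
  qed
  have lim2: "(\<lambda>n. norm (f - g (r n))) \<longlonglongrightarrow> norm (f - l)"
    by (intro tendsto_norm tendsto_diff gl tendsto_const)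
  have "C * R \<le> norm (f - l)"
    by (rule LIMSEQ_le[OF tendsto_const lim2]) (use g(4) less_imp_le in blast)
  moreover have "norm (f - l) \<le> 2 * R" using bnd \<open>l \<in> Kw\<close> by blast
  moreover have "2 * R < C * R" using Rpos Cgt by simp
  ultimately show False by linarith
qed


lemma powr_cancel_le:
  fixes x y p :: real
  assumes "0 \<le> x" "0 \<le> y" "p > 0" "x powr p \<le> y powr p"
  shows "x \<le> y"
proof -
  have "(x powr p) powr (1/p) \<le> (y powr p) powr (1/p)"
    using powr_mono2[of "1/p" "x powr p" "y powr p"] assms by simp
  moreover have "(x powr p) powr (1/p) = x" "(y powr p) powr (1/p) = y"
    using assms by (simp_all add: powr_powr)
  ultimately show ?thesis by simp
qed

theorem theorem6p2:
  fixes Y :: "'a::banach set" and nY :: "'a \<Rightarrow> real" and C0 :: real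
    and m :: nat and lam :: "nat \<Rightarrow> 'a \<Rightarrow> real" and f :: 'a
    and \<alpha> \<beta> C :: real
  defines "K \<equiv> {g\<in>Y. nY g \<le> 1}"
  defines "w \<equiv> (\<lambda>j. lam j f)"
  defines "Kw \<equiv> {h\<in>K. \<forall>j<m. lam j h = w j}"
  defines "L \<equiv> Lprime Y nY m lam w \<alpha> \<beta>"
  assumes Y_sub: "subspace Y"
    and nY_norm: "is_norm_on Y nY"
    and K_compact: "compact K"
    and C0: "\<forall>g\<in>Y. norm g \<le> C0 * nY g"
    and m_pos: "m \<ge> 1"
    and lam_lin: "\<forall>j<m. bounded_linear (lam j)"
    and lam_norm: "\<forall>j<m. onorm (lam j) = 1"
    and f_K: "f \<in> K"
    and R_nz: "cheb_radius Kw \<noteq> 0"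
    and \<alpha>_pos: "\<alpha> > 0" and \<beta>_pos: "\<beta> > 0"
    and C_gt: "C > 2"
  shows "\<exists>\<mu>0>0. \<forall>\<mu>. 0 < \<mu> \<and> \<mu> \<le> \<mu>0 \<longrightarrow>
     (\<forall>\<delta> \<Sigma> fh. \<delta> > 0 \<and> \<delta> powr \<alpha> \<le> \<mu>^2 \<and> set_dist K (\<Sigma> \<inter> K) < ereal \<delta>
          \<and> fh \<in> \<Sigma> \<and> (\<forall>g\<in>\<Sigma>. L \<mu> fh \<le> L \<mu> g)
        \<longrightarrow> norm (f - fh) \<le> C * cheb_radius Kw)
   \<and> (\<forall>\<epsilon> \<delta> \<Sigma> fh ft. \<epsilon> > 0 \<and> \<delta> > 0 \<and> \<epsilon> \<le> \<delta> powr \<alpha> \<and> \<delta> powr \<alpha> \<le> \<mu>^2 / 2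
          \<and> set_dist K (\<Sigma> \<inter> K) < ereal \<delta>
          \<and> fh \<in> \<Sigma> \<and> (\<forall>g\<in>\<Sigma>. L \<mu> fh \<le> L \<mu> g)
          \<and> ft \<in> \<Sigma> \<and> L \<mu> ft \<le> L \<mu> fh + ereal \<epsilon>
        \<longrightarrow> norm (f - ft) \<le> C * cheb_radius Kw)"
proof -
  define R where "R = cheb_radius Kw"
  have fKw: "f \<in> Kw" using f_K unfolding Kw_def w_def by simp
  have bKw: "bounded Kw" using compact_imp_bounded[OF K_compact] unfolding Kw_def
    by (rule bounded_subset) auto
  have bnd: "\<forall>h\<in>Kw. norm (f - h) \<le> 2 * R"
    using cheb_bound[OF bKw fKw] unfolding R_def by blast
  have "0 \<le> R" using bnd fKw by fastforce
  hence Rpos: "R > 0" using R_nz unfolding R_def by simp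
  have "\<exists>\<eta>>0. \<forall>g\<in>Y. nY g \<le> 1 + \<eta> \<and> (\<forall>j<m. \<bar>lam j g - w j\<bar> \<le> \<eta>) \<longrightarrow> norm (f - g) \<le> C * R"
    by (rule key_compact[OF Y_sub nY_norm K_compact K_def[THEN meta_eq_to_obj_eq] lam_lin Kw_def[THEN meta_eq_to_obj_eq] bnd Rpos C_gt])
  then obtain \<eta> where \<eta>1: "\<eta> > 0" and \<eta>H: "\<forall>g\<in>Y. nY g \<le> 1 + \<eta> \<and> (\<forall>j<m. \<bar>lam j g - w j\<bar> \<le> \<eta>) \<longrightarrow> norm (f - g) \<le> C * R"
    by blast
  have nY0': "\<forall>g\<in>Y. 0 \<le> nY g" using nY_norm[unfolded is_norm_on_def] by (rule conjunct1)
  have nY0: "\<And>g. g \<in> Y \<Longrightarrow> 0 \<le> nY g" using nY0' by blast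
  define a1 where "a1 = ((1 + \<eta>) powr \<beta> - 1) / 2"
  define a2 where "a2 = ((\<eta> / sqrt (real m)) powr \<alpha>) / 3"
  define \<mu>0 where "\<mu>0 = min 1 (min a1 a2)"
  have a1pos: "a1 > 0" unfolding a1_def using \<eta>1 \<beta>_pos by simp
  have a2pos: "a2 > 0" unfolding a2_def using \<eta>1 m_pos by simp
  have \<mu>0pos: "\<mu>0 > 0" unfolding \<mu>0_def using a1pos a2pos by simp
  have sm: "sqrt (real m) > 0" using m_pos by simp
  have claimB: "norm (f - g) \<le> C * R"
    if \<mu>: "0 < \<mu>" "\<mu> \<le> \<mu>0" and Lg: "L \<mu> g \<le> ereal (\<mu> + 2 * \<mu>^2)" for \<mu> g
  proof -
    have gY: "g \<in> Y"
    proof (rule ccontr)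
      assume "g \<notin> Y"
      hence "L \<mu> g = \<infinity>" unfolding L_def Lprime_def by simp
      thus False using Lg by simp
    qed
    define a where "a = vnorm m (\<lambda>j. w j - lam j g)"
    define A where "A = a powr \<alpha>"
    define B where "B = nY g powr \<beta>"
    have "L \<mu> g = ereal (A + \<mu> * B)" unfolding L_def Lprime_def A_def B_def a_def using gY by simp
    hence sum: "A + \<mu> * B \<le> \<mu> + 2 * \<mu>^2" using Lg by simp
    have A0: "0 \<le> A" and B0: "0 \<le> B" unfolding A_def B_def by simp_all
    have \<mu>1: "\<mu> \<le> 1" "\<mu> \<le> a1" "\<mu> \<le> a2" using \<mu> unfolding \<mu>0_def by auto
    have "\<mu>^2 \<le> \<mu>" using \<mu>(1) \<mu>1(1) by (simp add: power2_eq_square mult_le_cancel_left1)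
    moreover have "0 \<le> \<mu> * B" using B0 \<mu>(1) by simp
    ultimately have "A \<le> 3 * \<mu>" using sum by linarith
    also have "\<dots> \<le> (\<eta> / sqrt (real m)) powr \<alpha>" using \<mu>1(3) unfolding a2_def by simp
    finally have "a powr \<alpha> \<le> (\<eta> / sqrt (real m)) powr \<alpha>" unfolding A_def .
    hence a_le: "a \<le> \<eta> / sqrt (real m)"
      using powr_cancel_le[of a "\<eta> / sqrt (real m)" \<alpha>] \<alpha>_pos \<eta>1 sm vnorm_nonneg[of m]
      unfolding a_def by simp
    have lamg: "\<forall>j<m. \<bar>lam j g - w j\<bar> \<le> \<eta>"
    proof (intro allI impI)
      fix j assume j: "j < m"
      have "\<bar>w j - lam j g\<bar> \<le> sqrt (real m) * a"
        using vnorm_ge[OF j, of "\<lambda>j. w j - lam j g"] unfolding a_def by simp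
      also have "\<dots> \<le> sqrt (real m) * (\<eta> / sqrt (real m))"
        using a_le sm by (intro mult_left_mono) auto
      also have "\<dots> = \<eta>" using sm by simp
      finally show "\<bar>lam j g - w j\<bar> \<le> \<eta>" by (simp add: abs_minus_commute)
    qed
    have "\<mu> * B \<le> \<mu> * (1 + 2 * \<mu>)" using sum A0 by (simp add: algebra_simps power2_eq_square)
    hence "B \<le> 1 + 2 * \<mu>" using \<mu>(1) by simp
    also have "\<dots> \<le> (1 + \<eta>) powr \<beta>" using \<mu>1(2) unfolding a1_def by simp
    finally have "nY g powr \<beta> \<le> (1 + \<eta>) powr \<beta>" unfolding B_def .
    hence "nY g \<le> 1 + \<eta>"
      using powr_cancel_le[of "nY g" "1 + \<eta>" \<beta>] nY0[OF gY] \<eta>1 \<beta>_pos by simp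
    thus ?thesis using \<eta>H gY lamg by blast
  qed
  have claimC: "\<exists>g0\<in>\<Sigma>. L \<mu> g0 \<le> ereal (\<mu>^2 + \<mu>)"
    if \<mu>: "0 < \<mu>" and \<delta>: "\<delta> > 0" "\<delta> powr \<alpha> \<le> \<mu>^2" and sd: "set_dist K (\<Sigma> \<inter> K) < ereal \<delta>"
    for \<mu> \<delta> \<Sigma>
  proof -
    have "(INF b\<in>\<Sigma> \<inter> K. ereal (norm (f - b))) \<le> set_dist K (\<Sigma> \<inter> K)"
      unfolding set_dist_def using f_K by (rule SUP_upper)
    hence "(INF b\<in>\<Sigma> \<inter> K. ereal (norm (f - b))) < ereal \<delta>" using sd by simp
    then obtain b where b: "b \<in> \<Sigma>" "b \<in> K" "norm (f - b) < \<delta>"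
      unfolding INF_less_iff by auto
    have bY: "b \<in> Y" "nY b \<le> 1" using b(2) unfolding K_def by auto
    have "\<forall>j<m. \<bar>w j - lam j b\<bar> \<le> norm (f - b)"
    proof (intro allI impI)
      fix j assume j: "j < m"
      have bl: "bounded_linear (lam j)" using lam_lin j by blast
      have "w j - lam j b = lam j (f - b)" unfolding w_def
        using linear_diff[OF bounded_linear.linear[OF bl], of f b] by simp
      also have "\<bar>\<dots>\<bar> \<le> onorm (lam j) * norm (f - b)"
        using onorm[OF bl] by simp
      finally show "\<bar>w j - lam j b\<bar> \<le> norm (f - b)" using lam_norm j by simp
    qed
    hence va: "vnorm m (\<lambda>j. w j - lam j b) \<le> norm (f - b)" by (rule vnorm_le[OF m_pos])
    have "vnorm m (\<lambda>j. w j - lam j b) powr \<alpha> \<le> norm (f - b) powr \<alpha>"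
      using va vnorm_nonneg \<alpha>_pos by (intro powr_mono2) auto
    also have "\<dots> \<le> \<delta> powr \<alpha>" using b(3) \<alpha>_pos by (intro powr_mono2) auto
    finally have v2: "vnorm m (\<lambda>j. w j - lam j b) powr \<alpha> \<le> \<mu>^2" using \<delta>(2) by simp
    have "nY b powr \<beta> \<le> 1" using bY nY0 \<beta>_pos by (intro powr_le1) auto
    hence "\<mu> * nY b powr \<beta> \<le> \<mu>" using \<mu> by (simp add: mult_le_cancel_left1)
    hence "L \<mu> b \<le> ereal (\<mu>^2 + \<mu>)" using v2 bY unfolding L_def Lprime_def by simp
    thus ?thesis using b(1) by blast
  qed
  show ?thesis unfolding R_def[symmetric]
  proof (intro exI[of _ \<mu>0] conjI \<mu>0pos allI impI)
    fix \<mu> \<delta> \<Sigma> fh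
    assume \<mu>: "0 < \<mu> \<and> \<mu> \<le> \<mu>0"
      and H: "\<delta> > 0 \<and> \<delta> powr \<alpha> \<le> \<mu>^2 \<and> set_dist K (\<Sigma> \<inter> K) < ereal \<delta>
          \<and> fh \<in> \<Sigma> \<and> (\<forall>g\<in>\<Sigma>. L \<mu> fh \<le> L \<mu> g)"
    obtain g0 where g0: "g0 \<in> \<Sigma>" "L \<mu> g0 \<le> ereal (\<mu>^2 + \<mu>)"
      using claimC[of \<mu> \<delta> \<Sigma>] \<mu> H by blast
    have "L \<mu> fh \<le> L \<mu> g0" using H g0(1) by blast
    hence "L \<mu> fh \<le> ereal (\<mu>^2 + \<mu>)" using g0(2) by (rule order_trans)
    also have "\<dots> \<le> ereal (\<mu> + 2 * \<mu>^2)" using \<mu> by simp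
    finally show "norm (f - fh) \<le> C * R" using claimB \<mu> by blast
  next
    fix \<mu> \<epsilon> \<delta> \<Sigma> fh ft
    assume \<mu>: "0 < \<mu> \<and> \<mu> \<le> \<mu>0"
      and H: "\<epsilon> > 0 \<and> \<delta> > 0 \<and> \<epsilon> \<le> \<delta> powr \<alpha> \<and> \<delta> powr \<alpha> \<le> \<mu>^2 / 2
          \<and> set_dist K (\<Sigma> \<inter> K) < ereal \<delta>
          \<and> fh \<in> \<Sigma> \<and> (\<forall>g\<in>\<Sigma>. L \<mu> fh \<le> L \<mu> g)
          \<and> ft \<in> \<Sigma> \<and> L \<mu> ft \<le> L \<mu> fh + ereal \<epsilon>"
    have d2: "\<delta> powr \<alpha> \<le> \<mu>^2" using H zero_le_power2[of \<mu>] by linarith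
    obtain g0 where g0: "g0 \<in> \<Sigma>" "L \<mu> g0 \<le> ereal (\<mu>^2 + \<mu>)"
      using claimC[of \<mu> \<delta> \<Sigma>] \<mu> H d2 by blast
    have "L \<mu> fh \<le> L \<mu> g0" using H g0(1) by blast
    hence "L \<mu> fh \<le> ereal (\<mu>^2 + \<mu>)" using g0(2) by (rule order_trans)
    hence "L \<mu> fh + ereal \<epsilon> \<le> ereal (\<mu>^2 + \<mu>) + ereal \<epsilon>" by (rule add_right_mono)
    also have "\<dots> = ereal (\<mu>^2 + \<mu> + \<epsilon>)" by simp
    also have "\<dots> \<le> ereal (\<mu> + 2 * \<mu>^2)" using H \<mu> by simp
    finally have "L \<mu> fh + ereal \<epsilon> \<le> ereal (\<mu> + 2 * \<mu>^2)" .
    hence "L \<mu> ft \<le> ereal (\<mu> + 2 * \<mu>^2)" using H by (meson order_trans)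
    thus "norm (f - ft) \<le> C * R" using claimB \<mu> by blast
  qed
qed

end
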